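(* Let $X$ be a real-valued random variable with $\mathbb{E}X^{2} < \infty$, let $\rho\ge0$ and $g \in \mathcal{V}_{\rho}$. Then for all $s > 0$, \[ \limsup_{n \to \infty} \frac{\log \left(n \mathbb{P}\left(X > s \sqrt{n g(\log n)} \right) \right)}{g(\log n)} = - \frac{\overline{\lambda}_{1}}{2^{\rho}},\qquad \liminf_{n \to \infty} \frac{\log \left(n \mathbb{P}\left(X > s \sqrt{n g(\log n)} \right) \right)}{g(\log n)} = - \frac{\underline{\lambda}_{1}}{2^{\rho}}, \] and \[ \limsup_{n \to \infty} \frac{\log \left(n \mathbb{P}\left(X > \frac{s \sqrt{n}}{g(\log n)} \right) \right)}{g(\log n)} = - \frac{\overline{\lambda}_{1}}{2^{\rho}},\qquad \liminf_{n \to \infty} \frac{\log \left(n \mathbb{P}\left(X > \frac{s \sqrt{n}}{g(\log n)} \right) \right)}{g(\log n)} = - \frac{\underline{\lambda}_{1}}{2^{\rho}}. \]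
   Context: For $\rho\ge 0$, $\mathcal{V}_{\rho}$ denotes the set of all nondecreasing functions $g:[0,\infty)\to[0,\infty)$ regularly varying at infinity with index $\rho$ (i.e. $\lim_{t\to\infty} g(xt)/g(t)=x^\rho$ for all $x>0$) with $\lim_{t\to\infty}g(t)=\infty$. $\log$ is the natural logarithm, $\log 0=-\infty$. $\overline{\lambda}_{1} = - \limsup_{t \to \infty} \frac{\log (t^{2} \mathbb{P}(X > t ))}{g(\log t)}$ and $\underline{\lambda}_{1} = - \liminf_{t \to \infty} \frac{\log (t^{2} \mathbb{P}(X > t ))}{g(\log t)}$, with values in $[0,\infty]$. *)

theory Defs
  imports "HOL-Probability.Probability"
begin

definition elog :: "real \<Rightarrow> ereal" where
  "elog x = (if x > 0 then ereal (ln x) else -\<infinity>)"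

definition regvar_class :: "real \<Rightarrow> (real \<Rightarrow> real) \<Rightarrow> bool" where
  "regvar_class \<rho> g \<longleftrightarrow>
     mono_on {0..} g \<and> (\<forall>t\<ge>0. g t \<ge> 0) \<and>
     (\<forall>x>0. ((\<lambda>t. g (x * t) / g t) \<longlongrightarrow> x powr \<rho>) at_top) \<and>
     filterlim g at_top at_top"

definition tailP :: "'a measure \<Rightarrow> ('a \<Rightarrow> real) \<Rightarrow> real \<Rightarrow> real" where
  "tailP M X t = measure M {\<omega> \<in> space M. X \<omega> > t}"

definition lambda1_upper :: "'a measure \<Rightarrow> ('a \<Rightarrow> real) \<Rightarrow> (real \<Rightarrow> real) \<Rightarrow> ereal" where
  "lambda1_upper M X g =
     - Limsup at_top (\<lambda>t::real. elog (t^2 * tailP M X t) / ereal (g (ln t)))"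

definition lambda1_lower :: "'a measure \<Rightarrow> ('a \<Rightarrow> real) \<Rightarrow> (real \<Rightarrow> real) \<Rightarrow> ereal" where
  "lambda1_lower M X g =
     - Liminf at_top (\<lambda>t::real. elog (t^2 * tailP M X t) / ereal (g (ln t)))"

end

theory Submission imports Defs begin

lemma Limsup_compose_le:
  fixes f :: "'b \<Rightarrow> 'c::complete_linorder"
  assumes "filterlim k G F"
  shows "Limsup F (\<lambda>x. f (k x)) \<le> Limsup G f"
  unfolding Limsup_le_iff
proof (intro allI impI)
  fix y assume "y > Limsup G f"
  then have "eventually (\<lambda>x. f x < y) G" by (rule Limsup_lessD)
  then show "eventually (\<lambda>x. y > f (k x)) F"
    using assms filterlim_iff by fastforce
qed

lemma Liminf_compose_ge:
  fixes f :: "'b \<Rightarrow> 'c::complete_linorder"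
  assumes "filterlim k G F"
  shows "Liminf G f \<le> Liminf F (\<lambda>x. f (k x))"
  unfolding le_Liminf_iff
proof (intro allI impI)
  fix y assume "y < Liminf G f"
  then have "eventually (\<lambda>x. f x > y) G" by (rule less_LiminfD)
  then show "eventually (\<lambda>x. y < f (k x)) F"
    using assms filterlim_iff by fastforce
qed

lemma fin_lemma:
  fixes x y :: ereal
  assumes y: "y \<le> 0"
    and h: "\<And>e. 0 < e \<Longrightarrow> e < 1 \<Longrightarrow> x \<le> y * ereal (1/(1+e)) + ereal e"
  shows "x \<le> y"
proof (cases y)
  case MInf
  have "x \<le> y * ereal (1/(1+1/2)) + ereal (1/2)" using h[of "1/2"] by simp
  then show ?thesis using MInf by simp
next
  case (real r)
  show ?thesis
  proof (rule ereal_le_epsilon2)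
    fix d :: real assume d: "0 < d"
    define e where "e = min (1/2) (d / (\<bar>r\<bar> + 1))"
    have e0: "0 < e" "e < 1" using d by (auto simp: e_def)
    have "e \<le> d / (\<bar>r\<bar> + 1)" by (simp add: e_def)
    then have "e * (\<bar>r\<bar> + 1) \<le> d"
      by (simp add: le_divide_eq add_pos_nonneg)
    have "r / (1+e) + e \<le> r + d"
    proof -
      have "r / (1+e) = r - r * e / (1+e)" using e0 by (simp add: field_simps)
      also have "- r * e / (1+e) \<le> \<bar>r\<bar> * e"
      proof -
        have "(- r) * e \<le> \<bar>r\<bar> * e" using e0
          by (intro mult_right_mono) auto
        then have "- r * e / (1+e) \<le> \<bar>r\<bar> * e / (1+e)" using e0
          by (intro divide_right_mono) auto
        also have "\<dots> \<le> \<bar>r\<bar> * e" using e0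
          by (simp add: divide_le_eq mult_nonneg_nonneg mult_le_cancel_left1 not_less)
        finally show ?thesis .
      qed
      then have "r - r * e / (1+e) \<le> r + \<bar>r\<bar> * e" by simp
      finally show ?thesis using \<open>e * (\<bar>r\<bar> + 1) \<le> d\<close> by (simp add: algebra_simps)
    qed
    then show "x \<le> y + ereal d" using h[OF e0] real
      by (simp) (metis ereal_less_eq(3) order_trans plus_ereal.simps(1) times_ereal.simps(1) divide_inverse mult_1)
  qed
next
  case PInf then show ?thesis using y by simp
qed

lemma ereal_mult_nonpos_anti:
  fixes x :: ereal
  assumes "x \<le> 0" "0 < a" "a \<le> b"
  shows "x * ereal b \<le> x * ereal a"
  using assms by (cases x) (auto intro: mult_left_mono_neg)

lemma ereal_nonpos_mult:
  fixes y :: ereal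
  assumes "y \<le> 0" "q \<ge> 0"
  shows "y * ereal q \<le> 0"
  using assms by (cases y) (auto simp: mult_nonpos_nonneg)

lemma limsup_liminf_mult_conv:
  fixes x :: "nat \<Rightarrow> ereal" and r :: "nat \<Rightarrow> real"
  assumes xn: "eventually (\<lambda>n. x n \<le> 0) sequentially"
    and r: "r \<longlonglongrightarrow> q" and q: "q > 0"
  shows "limsup (\<lambda>n. x n * ereal (r n)) = limsup x * ereal q
       \<and> liminf (\<lambda>n. x n * ereal (r n)) = liminf x * ereal q"
proof -
  have bnd: "eventually (\<lambda>n. x n * ereal (q * (1+e)) \<le> x n * ereal (r n)
                      \<and> x n * ereal (r n) \<le> x n * ereal q * ereal (1/(1+e))) sequentially"
    if e: "0 < e" for e
  proof -
    have "q / (1+e) < q" "q < q * (1+e)" using e q by (auto simp: field_simps)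
    then have "eventually (\<lambda>n. q/(1+e) < r n) sequentially" "eventually (\<lambda>n. r n < q*(1+e)) sequentially"
      using r by (auto dest: order_tendstoD)
    then show ?thesis using xn
    proof eventually_elim
      case (elim n)
      have qe: "0 < q/(1+e)" using q e by simp
      have "x n * ereal (q * (1+e)) \<le> x n * ereal (r n)"
        using elim qe by (intro ereal_mult_nonpos_anti) auto
      moreover have "x n * ereal (r n) \<le> x n * ereal (q/(1+e))"
        using elim qe by (intro ereal_mult_nonpos_anti) auto
      moreover have "x n * ereal (q/(1+e)) = x n * ereal q * ereal (1/(1+e))"
        by (simp add: mult.assoc)
      ultimately show ?case by simp
    qed
  qed
  have x0: "limsup x \<le> 0" "liminf x \<le> 0"
    using xn by (auto intro: Limsup_bounded Liminf_le)
  have xr0: "eventually (\<lambda>n. x n * ereal (r n) \<le> 0) sequentially"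
  proof -
    have "eventually (\<lambda>n. r n > 0) sequentially" using r q by (auto dest: order_tendstoD)
    then show ?thesis using xn
    proof eventually_elim
      case (elim n) then show ?case by (intro ereal_nonpos_mult) auto
    qed
  qed
  then have xr0': "limsup (\<lambda>n. x n * ereal (r n)) \<le> 0" "liminf (\<lambda>n. x n * ereal (r n)) \<le> 0"
    by (auto intro: Limsup_bounded Liminf_le)
  have L0: "limsup x * ereal q \<le> 0" "liminf x * ereal q \<le> 0"
    using x0 q by (auto intro: ereal_nonpos_mult)
  have inv: "y * ereal (q * (1+e)) * ereal (1/(1+e)) = y * ereal q" if "e > 0" for y e
    using that by (simp add: mult.assoc)
  show ?thesis
  proof (intro conjI antisym)
    show "limsup (\<lambda>n. x n * ereal (r n)) \<le> limsup x * ereal q"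
    proof (rule fin_lemma[OF L0(1)])
      fix e :: real assume e: "0 < e" "e < 1"
      have "limsup (\<lambda>n. x n * ereal (r n)) \<le> limsup (\<lambda>n. x n * ereal q * ereal (1/(1+e)))"
        using bnd[OF e(1)] by (intro Limsup_mono) (auto elim: eventually_mono)
      also have "\<dots> = limsup x * ereal q * ereal (1/(1+e))"
        using e q by (simp add: limsup_ereal_mult_right)
      finally show "limsup (\<lambda>n. x n * ereal (r n)) \<le> limsup x * ereal q * ereal (1/(1+e)) + ereal e"
        using e by (metis add_increasing2 ereal_less_eq(5) less_imp_le order_trans)
    qed
    show "limsup x * ereal q \<le> limsup (\<lambda>n. x n * ereal (r n))"
    proof (rule fin_lemma[OF xr0'(1)])
      fix e :: real assume e: "0 < e" "e < 1"
      have "limsup x * ereal (q * (1+e)) = limsup (\<lambda>n. x n * ereal (q * (1+e)))"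
        using e q by (simp add: limsup_ereal_mult_right)
      also have "\<dots> \<le> limsup (\<lambda>n. x n * ereal (r n))"
        using bnd[OF e(1)] by (intro Limsup_mono) (auto elim: eventually_mono)
      finally have "limsup x * ereal (q * (1+e)) * ereal (1/(1+e)) \<le> limsup (\<lambda>n. x n * ereal (r n)) * ereal (1/(1+e))"
        using e by (intro ereal_mult_right_mono) auto
      then show "limsup x * ereal q \<le> limsup (\<lambda>n. x n * ereal (r n)) * ereal (1/(1+e)) + ereal e"
        using e inv by (metis add_increasing2 ereal_less_eq(5) less_imp_le)
    qed
    show "liminf (\<lambda>n. x n * ereal (r n)) \<le> liminf x * ereal q"
    proof (rule fin_lemma[OF L0(2)])
      fix e :: real assume e: "0 < e" "e < 1"
      have "liminf (\<lambda>n. x n * ereal (r n)) \<le> liminf (\<lambda>n. x n * ereal q * ereal (1/(1+e)))"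
        using bnd[OF e(1)] by (intro Liminf_mono) (auto elim: eventually_mono)
      also have "\<dots> = liminf x * ereal q * ereal (1/(1+e))"
        using e q by (simp add: Liminf_ereal_mult_right)
      finally show "liminf (\<lambda>n. x n * ereal (r n)) \<le> liminf x * ereal q * ereal (1/(1+e)) + ereal e"
        using e by (metis add_increasing2 ereal_less_eq(5) less_imp_le order_trans)
    qed
    show "liminf x * ereal q \<le> liminf (\<lambda>n. x n * ereal (r n))"
    proof (rule fin_lemma[OF xr0'(2)])
      fix e :: real assume e: "0 < e" "e < 1"
      have "liminf x * ereal (q * (1+e)) = liminf (\<lambda>n. x n * ereal (q * (1+e)))"
        using e q by (simp add: Liminf_ereal_mult_right)
      also have "\<dots> \<le> liminf (\<lambda>n. x n * ereal (r n))"
        using bnd[OF e(1)] by (intro Liminf_mono) (auto elim: eventually_mono)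
      finally have "liminf x * ereal (q * (1+e)) * ereal (1/(1+e)) \<le> liminf (\<lambda>n. x n * ereal (r n)) * ereal (1/(1+e))"
        using e by (intro ereal_mult_right_mono) auto
      then show "liminf x * ereal q \<le> liminf (\<lambda>n. x n * ereal (r n)) * ereal (1/(1+e)) + ereal e"
        using e inv by (metis add_increasing2 ereal_less_eq(5) less_imp_le)
    qed
  qed
qed

lemma interpolation:
  fixes a :: "real \<Rightarrow> ereal" and tn :: "nat \<Rightarrow> real"
  assumes tn0: "tn 0 = 0"
    and tn_top: "filterlim tn at_top sequentially"
    and tn_ratio: "eventually (\<lambda>n. tn (Suc n) \<le> 2 * tn n) sequentially"
    and QM: "\<And>e. e > 0 \<Longrightarrow> eventually (\<lambda>t. \<forall>t'. t \<le> t' \<and> t' \<le> 2 * t \<longrightarrow>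
                      a t' \<le> a t * ereal (1/(1+e)) + ereal e) at_top"
    and a0: "eventually (\<lambda>t. a t \<le> 0) at_top"
  shows "limsup (\<lambda>n. a (tn n)) = Limsup at_top a \<and> liminf (\<lambda>n. a (tn n)) = Liminf at_top a"
proof -
  define k where "k t = (LEAST m. t < tn (Suc m))" for t
  have ex: "\<exists>m. t < tn (Suc m)" for t
  proof -
    have "eventually (\<lambda>n. tn n > t) sequentially"
      using tn_top by (simp add: filterlim_at_top_dense)
    then obtain N where "\<And>n. n \<ge> N \<Longrightarrow> tn n > t" by (auto simp: eventually_sequentially)
    then show ?thesis by (intro exI[of _ N]) auto
  qed
  have k1: "t < tn (Suc (k t))" for t
    unfolding k_def by (rule LeastI_ex[OF ex])
  have k2: "tn (k t) \<le> t" if "0 \<le> t" for t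
  proof (cases "k t")
    case 0 then show ?thesis using tn0 that by simp
  next
    case (Suc j)
    then have "\<not> t < tn (Suc j)" unfolding k_def
      by (metis lessI not_less_Least)
    then show ?thesis using Suc by simp
  qed
  have k_top: "filterlim k sequentially at_top"
    unfolding filterlim_at_top
  proof (intro allI)
    fix N :: nat
    have "eventually (\<lambda>t. t \<ge> Max (tn ` {..N})) at_top" by (rule eventually_ge_at_top)
    then show "eventually (\<lambda>t. N \<le> k t) at_top"
    proof eventually_elim
      case (elim t)
      show ?case
      proof (rule ccontr)
        assume "\<not> N \<le> k t"
        then have "Suc (k t) \<in> {..N}" by simp
        then have "tn (Suc (k t)) \<le> Max (tn ` {..N})" by (intro Max_ge) auto
        with k1[of t] elim show False by simp
      qed
    qed
  qed
  have ks_top: "filterlim (\<lambda>t. Suc (k t)) sequentially at_top"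
    using k_top filterlim_Suc filterlim_compose by blast
  have tk_top: "filterlim (\<lambda>t. tn (k t)) at_top at_top"
    using filterlim_compose[OF tn_top k_top] .
  have ratio_k: "eventually (\<lambda>t. tn (Suc (k t)) \<le> 2 * tn (k t)) at_top"
    using k_top tn_ratio filterlim_iff by fastforce
  have c0: "0 < 1/(1+e)" if "0 < e" for e :: real using that by simp
  have lim1: "Limsup at_top a \<le> limsup (\<lambda>n. a (tn n))"
  proof (rule fin_lemma)
    show "limsup (\<lambda>n. a (tn n)) \<le> 0"
      using a0 tn_top filterlim_iff by (intro Limsup_bounded) fastforce
  next
    fix e :: real assume e: "0 < e" "e < 1"
    have "eventually (\<lambda>t. a t \<le> a (tn (k t)) * ereal (1/(1+e)) + ereal e) at_top"
    proof -
      have "eventually (\<lambda>t. \<forall>t'. tn (k t) \<le> t' \<and> t' \<le> 2 * tn (k t) \<longrightarrow>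
                      a t' \<le> a (tn (k t)) * ereal (1/(1+e)) + ereal e) at_top"
        using QM[OF e(1)] tk_top filterlim_iff by fastforce
      then show ?thesis using ratio_k eventually_ge_at_top[of 0]
      proof eventually_elim
        case (elim t)
        then show ?case using k1[of t] k2[of t] by auto
      qed
    qed
    then have "Limsup at_top a \<le> Limsup at_top (\<lambda>t. a (tn (k t)) * ereal (1/(1+e)) + ereal e)"
      by (rule Limsup_mono)
    also have "\<dots> = Limsup at_top (\<lambda>t. a (tn (k t))) * ereal (1/(1+e)) + ereal e"
      using e by (simp add: Limsup_add_ereal_right Limsup_ereal_mult_right)
    also have "\<dots> \<le> limsup (\<lambda>n. a (tn n)) * ereal (1/(1+e)) + ereal e"
      using e by (intro add_right_mono ereal_mult_right_mono Limsup_compose_le[OF k_top]) auto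
    finally show "Limsup at_top a \<le> limsup (\<lambda>n. a (tn n)) * ereal (1/(1+e)) + ereal e" .
  qed
  have lim2: "liminf (\<lambda>n. a (tn n)) \<le> Liminf at_top a"
  proof (rule fin_lemma)
    show "Liminf at_top a \<le> 0"
      using a0 by (intro Liminf_le) auto
  next
    fix e :: real assume e: "0 < e" "e < 1"
    have "eventually (\<lambda>t. a (tn (Suc (k t))) \<le> a t * ereal (1/(1+e)) + ereal e) at_top"
      using QM[OF e(1)] ratio_k eventually_ge_at_top[of 0]
    proof eventually_elim
      case (elim t)
      then show ?case using k1[of t] k2[of t] by auto
    qed
    have "liminf (\<lambda>n. a (tn n)) \<le> Liminf at_top (\<lambda>t. a (tn (Suc (k t))))"
      by (rule Liminf_compose_ge[OF ks_top])
    also have "\<dots> \<le> Liminf at_top (\<lambda>t. a t * ereal (1/(1+e)) + ereal e)"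
      by (rule Liminf_mono) fact
    also have "\<dots> = Liminf at_top a * ereal (1/(1+e)) + ereal e"
      using e by (simp add: Liminf_add_ereal_right Liminf_ereal_mult_right)
    finally show "liminf (\<lambda>n. a (tn n)) \<le> Liminf at_top a * ereal (1/(1+e)) + ereal e" .
  qed
  have "limsup (\<lambda>n. a (tn n)) \<le> Limsup at_top a"
    by (rule Limsup_compose_le[OF tn_top])
  moreover have "Liminf at_top a \<le> liminf (\<lambda>n. a (tn n))"
    by (rule Liminf_compose_ge[OF tn_top])
  ultimately show ?thesis using lim1 lim2 by auto
qed

lemma regvarD:
  assumes "regvar_class \<rho> g"
  shows "mono_on {0..} g" "\<And>t. t \<ge> 0 \<Longrightarrow> g t \<ge> 0"
    "\<And>x. x > 0 \<Longrightarrow> ((\<lambda>t. g (x * t) / g t) \<longlongrightarrow> x powr \<rho>) at_top"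
    "filterlim g at_top at_top"
  using assms unfolding regvar_class_def by auto

lemma g_ev_ge:
  assumes "regvar_class \<rho> g"
  shows "eventually (\<lambda>x. g x \<ge> C) at_top"
  using regvarD(4)[OF assms] by (simp add: filterlim_at_top)

lemma g_shift:
  assumes g: "regvar_class \<rho> g" and \<rho>: "\<rho> \<ge> 0" and c: "c \<ge> 0" and e: "e > 0"
  shows "eventually (\<lambda>x. g (x + c) \<le> (1+e) * g x) at_top"
proof -
  define \<eta> where "\<eta> = (1+e/2) powr (1/(\<rho>+1)) - 1"
  have "(1+e/2) powr 0 < (1+e/2) powr (1/(\<rho>+1))"
    using e \<rho> by (intro powr_less_mono) auto
  then have \<eta>0: "\<eta> > 0" unfolding \<eta>_def using e by simp
  have "(1+\<eta>) powr \<rho> = (1+e/2) powr (1/(\<rho>+1) * \<rho>)"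
    unfolding \<eta>_def by (simp add: powr_powr)
  also have "\<dots> \<le> (1+e/2) powr 1"
    using e \<rho> by (intro powr_mono) (auto simp: field_simps)
  also have "\<dots> < 1+e" using e by simp
  finally have lt: "(1+\<eta>) powr \<rho> < 1+e" .
  have "eventually (\<lambda>t. g ((1+\<eta>) * t) / g t < 1+e) at_top"
    using order_tendstoD(2)[OF regvarD(3)[OF g, of "1+\<eta>"] lt] \<eta>0 by simp
  then show ?thesis using g_ev_ge[OF g, of 1] eventually_ge_at_top[of "c/\<eta>"] eventually_ge_at_top[of 0]
  proof eventually_elim
    case (elim t)
    have "c \<le> \<eta> * t" using elim(3) \<eta>0 by (simp add: field_simps)
    then have "g (t + c) \<le> g ((1+\<eta>) * t)"
      using elim(4) c \<eta>0 by (intro mono_onD[OF regvarD(1)[OF g]]) (auto simp: algebra_simps)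
    also have "\<dots> < (1+e) * g t" using elim(1,2) by (simp add: pos_divide_less_eq)
    finally show ?case by simp
  qed
qed

lemma lng_over_x:
  assumes g: "regvar_class \<rho> g" and \<rho>: "\<rho> \<ge> 0"
  shows "((\<lambda>x. ln (g x) / x) \<longlongrightarrow> 0) at_top"
proof (rule tendstoI)
  fix e :: real assume e: "e > 0"
  define d where "d = e/2"
  have d: "d > 0" using e by (simp add: d_def)
  have "eventually (\<lambda>x. g (x + 1) \<le> exp d * g x) at_top"
    using g_shift[OF g \<rho>, of 1 "exp d - 1"] d by simp
  then have "eventually (\<lambda>x. g (x + 1) \<le> exp d * g x \<and> g x \<ge> 1 \<and> x \<ge> 0) at_top"
    using g_ev_ge[OF g, of 1] eventually_ge_at_top[of 0] by eventually_elim auto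
  then obtain x0 where x0: "\<And>x. x \<ge> x0 \<Longrightarrow> g (x + 1) \<le> exp d * g x \<and> g x \<ge> 1 \<and> x \<ge> 0"
    by (auto simp: eventually_at_top_linorder)
  have ind: "g (x0 + real k) \<le> exp (d * real k) * g x0" for k :: nat
  proof (induction k)
    case 0 then show ?case by simp
  next
    case (Suc k)
    have "g (x0 + real (Suc k)) = g ((x0 + real k) + 1)" by (simp add: algebra_simps)
    also have "\<dots> \<le> exp d * g (x0 + real k)" using x0[of "x0 + real k"] by simp
    also have "\<dots> \<le> exp d * (exp (d * real k) * g x0)"
      using Suc by (intro mult_left_mono) auto
    also have "\<dots> = exp (d * real (Suc k)) * g x0"
      by (simp add: exp_add[symmetric] algebra_simps)
    finally show ?case .
  qed
  define B where "B = \<bar>d * (1 - x0) + ln (g x0)\<bar>"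
  have gx0: "g x0 \<ge> 1" using x0[of x0] by simp
  have "eventually (\<lambda>x. x \<ge> x0 \<and> x > B / d \<and> x > 0) at_top"
    using eventually_ge_at_top[of x0] eventually_gt_at_top[of "B/d"] eventually_gt_at_top[of 0]
    by eventually_elim auto
  then show "eventually (\<lambda>x. dist (ln (g x) / x) 0 < e) at_top"
  proof eventually_elim
    case (elim x)
    define k where "k = nat \<lceil>x - x0\<rceil>"
    have k1: "real k \<ge> x - x0" "real k \<le> x - x0 + 1" using elim unfolding k_def by linarith+
    have gx: "g x \<ge> 1" using x0[of x] elim by simp
    have "g x \<le> g (x0 + real k)"
      using k1 elim x0[of x0] by (intro mono_onD[OF regvarD(1)[OF g]]) auto
    also have "\<dots> \<le> exp (d * real k) * g x0" by (rule ind)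
    finally have "ln (g x) \<le> ln (exp (d * real k) * g x0)" using gx by simp
    also have "\<dots> = d * real k + ln (g x0)" using gx0 by (simp add: ln_mult)
    also have "\<dots> \<le> d * (x - x0 + 1) + ln (g x0)" using k1 d by (intro add_right_mono mult_left_mono) auto
    also have "\<dots> \<le> d * x + B" unfolding B_def by (simp add: algebra_simps)
    also have "\<dots> < d * x + d * x" using elim d by (simp add: field_simps)
    finally have "ln (g x) < e * x" unfolding d_def by simp
    moreover have "ln (g x) \<ge> 0" using gx by simp
    ultimately show ?case using elim by (simp add: abs_if divide_less_eq)
  qed
qed

lemma lng_over_g:
  assumes g: "regvar_class \<rho> g"
  shows "((\<lambda>x. ln (g x) / g x) \<longlongrightarrow> 0) at_top"
  using filterlim_compose[OF ln_x_over_x_tendsto_0 regvarD(4)[OF g]] by simp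

lemma reg_ratio:
  assumes g: "regvar_class \<rho> g"
    and u: "filterlim u at_top sequentially"
    and v: "((\<lambda>n. v n / u n) \<longlongrightarrow> c) sequentially" and c: "c > 0"
  shows "((\<lambda>n. g (v n) / g (u n)) \<longlongrightarrow> c powr \<rho>) sequentially"
proof (rule tendstoI)
  fix e :: real assume e: "e > 0"
  have "((\<lambda>x. x powr \<rho>) \<longlongrightarrow> c powr \<rho>) (at c)"
    using c by (intro tendsto_intros) auto
  from LIM_D[OF this, of "e/2"] e obtain \<delta> where \<delta>: "\<delta> > 0"
    and h\<delta>: "\<And>x. x \<noteq> c \<and> norm (x - c) < \<delta> \<Longrightarrow> norm (x powr \<rho> - c powr \<rho>) < e/2"
    by auto
  define \<eta> where "\<eta> = min (\<delta>/2) (c/2)"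
  have \<eta>: "\<eta> > 0" "\<eta> < \<delta>" "\<eta> < c" using \<delta> c by (auto simp: \<eta>_def)
  have p1: "\<bar>(c+\<eta>) powr \<rho> - c powr \<rho>\<bar> < e/2" using h\<delta>[of "c+\<eta>"] \<eta> by auto
  have p2: "\<bar>(c-\<eta>) powr \<rho> - c powr \<rho>\<bar> < e/2" using h\<delta>[of "c-\<eta>"] \<eta> by auto
  have up: "eventually (\<lambda>n. g ((c+\<eta>) * u n) / g (u n) < (c+\<eta>) powr \<rho> + e/2) sequentially"
    using filterlim_compose[OF regvarD(3)[OF g, of "c+\<eta>"] u] \<eta> c e
    by (intro order_tendstoD(2)) auto
  have lo: "eventually (\<lambda>n. g ((c-\<eta>) * u n) / g (u n) > (c-\<eta>) powr \<rho> - e/2) sequentially"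
    using filterlim_compose[OF regvarD(3)[OF g, of "c-\<eta>"] u] \<eta> c e
    by (intro order_tendstoD(1)) auto
  have vb: "eventually (\<lambda>n. c - \<eta> < v n / u n \<and> v n / u n < c + \<eta>) sequentially"
  proof -
    have "c - \<eta> < c" "c < c + \<eta>" using \<eta> by auto
    from order_tendstoD(1)[OF v this(1)] order_tendstoD(2)[OF v this(2)]
    show ?thesis by eventually_elim auto
  qed
  have up0: "eventually (\<lambda>n. u n > 0) sequentially"
    using u by (simp add: filterlim_at_top_dense)
  have gu: "eventually (\<lambda>n. g (u n) \<ge> 1) sequentially"
    using g_ev_ge[OF g, of 1] u filterlim_iff by fastforce
  show "eventually (\<lambda>n. dist (g (v n) / g (u n)) (c powr \<rho>) < e) sequentially"
    using up lo vb up0 gu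
  proof eventually_elim
    case (elim n)
    have l: "(c - \<eta>) * u n \<le> v n" "v n \<le> (c + \<eta>) * u n"
      using elim(3,4) by (auto simp: field_simps)
    have "(c - \<eta>) * u n \<ge> 0" using \<eta> elim(4) by simp
    then have g1: "g ((c - \<eta>) * u n) \<le> g (v n)" "g (v n) \<le> g ((c + \<eta>) * u n)"
      using l by (auto intro!: mono_onD[OF regvarD(1)[OF g]])
    have "g ((c - \<eta>) * u n) / g (u n) \<le> g (v n) / g (u n)"
         "g (v n) / g (u n) \<le> g ((c + \<eta>) * u n) / g (u n)"
      using g1 elim(5) by (auto intro: divide_right_mono)
    then show ?case using elim(1,2) p1 p2 by (simp add: dist_real_def abs_if split: if_splits)
  qed
qed

lemma elog_zero[simp]: "elog 0 = -\<infinity>"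
  by (simp add: elog_def)

lemma elog_pos: "x > 0 \<Longrightarrow> elog x = ereal (ln x)"
  by (simp add: elog_def)

lemma minf_div_pos: "y > 0 \<Longrightarrow> -\<infinity> / ereal y = -\<infinity>"
  by (simp add: divide_ereal_def)

lemma ev_ln: "eventually P at_top \<Longrightarrow> eventually (\<lambda>t::real. P (ln t)) at_top"
  using ln_at_top unfolding filterlim_iff by blast

lemma QM:
  fixes T :: "real \<Rightarrow> real"
  assumes g: "regvar_class \<rho> g" and \<rho>: "\<rho> \<ge> 0"
    and Tnn: "\<And>t. T t \<ge> 0" and Tanti: "\<And>t t'. t \<le> t' \<Longrightarrow> T t' \<le> T t"
    and Tsmall: "eventually (\<lambda>t. t^2 * T t \<le> 1) at_top" and e: "e > 0"
  shows "eventually (\<lambda>t. \<forall>t'. t \<le> t' \<and> t' \<le> 2 * t \<longrightarrow>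
           elog (t'^2 * T t') / ereal (g (ln t'))
             \<le> elog (t^2 * T t) / ereal (g (ln t)) * ereal (1/(1+e)) + ereal e) at_top"
proof -
  have E3: "eventually (\<lambda>t. g (ln t + ln 2) \<le> (1+e) * g (ln t)) at_top"
    using g_shift[OF g \<rho>, of "ln 2" e] e by (intro ev_ln) auto
  have E4: "eventually (\<lambda>t. g (ln t) \<ge> max 1 (ln 4 / e)) at_top"
    using g_ev_ge[OF g, of "max 1 (ln 4 / e)"] by (intro ev_ln)
  show ?thesis using E3 E4 Tsmall eventually_ge_at_top[of 1]
  proof eventually_elim
    case (elim t)
    show ?case
    proof (intro allI impI)
      fix t' assume t': "t \<le> t' \<and> t' \<le> 2 * t"
      define Gt where "Gt = g (ln t)"
      define Gt' where "Gt' = g (ln t')"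
      have Gt1: "Gt \<ge> 1" "Gt \<ge> ln 4 / e" using elim(2) by (auto simp: Gt_def)
      have t0: "t > 0" "t' > 0" using elim(4) t' by auto
      have "Gt \<le> Gt'" unfolding Gt_def Gt'_def
        using elim(4) t' by (intro mono_onD[OF regvarD(1)[OF g]]) auto
      have "ln t' \<le> ln (2 * t)" using t' t0 by simp
      then have "ln t' \<le> ln t + ln 2" using t0 by (simp add: ln_mult)
      then have "Gt' \<le> g (ln t + ln 2)" unfolding Gt'_def
        using elim(4) t' by (intro mono_onD[OF regvarD(1)[OF g]]) auto
      then have Gt'u: "Gt' \<le> (1+e) * Gt" using elim(1) by (simp add: Gt_def)
      show "elog (t'^2 * T t') / ereal (g (ln t'))
             \<le> elog (t^2 * T t) / ereal (g (ln t)) * ereal (1/(1+e)) + ereal e"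
      proof (cases "T t' = 0")
        case True
        then show ?thesis using Gt1 \<open>Gt \<le> Gt'\<close> by (simp add: Gt'_def minf_div_pos)
      next
        case False
        then have T'p: "T t' > 0" using Tnn[of t'] by simp
        then have Tp: "T t > 0" using Tanti[of t t'] t' by simp
        define A where "A = ln (t^2 * T t)"
        have A0: "A \<le> 0" using elim(3) Tp t0 by (simp add: A_def)
        have "t'^2 * T t' \<le> 4 * (t^2 * T t)"
        proof -
          have "t'^2 \<le> (2*t)^2" using t' t0 by (intro power_mono) auto
          then have "t'^2 * T t' \<le> (2*t)^2 * T t"
            using Tanti[of t t'] t' T'p by (intro mult_mono) auto
          then show ?thesis by (simp add: power_mult_distrib)
        qed
        moreover have "t'^2 * T t' > 0" using T'p t0 by simp
        ultimately have "ln (t'^2 * T t') \<le> ln (4 * (t^2 * T t))" by (intro ln_mono) auto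
        also have "\<dots> = A + ln 4" using Tp t0 by (simp add: A_def ln_mult)
        finally have l1: "ln (t'^2 * T t') \<le> A + ln 4" .
        have Gt'p: "Gt' > 0" using Gt1 \<open>Gt \<le> Gt'\<close> by simp
        have "ln (t'^2 * T t') / Gt' \<le> (A + ln 4) / Gt'"
          using l1 Gt'p by (intro divide_right_mono) auto
        also have "\<dots> = A / Gt' + ln 4 / Gt'" by (simp add: add_divide_distrib)
        also have "A / Gt' \<le> A / ((1+e) * Gt)"
          using Gt'u A0 Gt'p e Gt1 by (intro divide_left_mono_neg) auto
        also have "ln 4 / Gt' \<le> ln 4 / Gt"
          using \<open>Gt \<le> Gt'\<close> Gt1 by (intro divide_left_mono) auto
        also have "ln 4 / Gt \<le> e"
          using Gt1 e by (simp add: divide_le_eq mult.commute pos_divide_le_eq)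
        finally have ineq: "ln (t'^2 * T t') / Gt' \<le> A / Gt * (1/(1+e)) + e"
          by (simp add: field_simps)
        show ?thesis
          using ineq T'p Tp t0 Gt1 Gt'p
          by (simp add: elog_pos Gt_def Gt'_def A_def)
      qed
    qed
  qed
qed

lemma master:
  fixes T :: "real \<Rightarrow> real" and tn :: "nat \<Rightarrow> real"
  assumes g: "regvar_class \<rho> g" and \<rho>: "\<rho> \<ge> 0"
    and Tnn: "\<And>t. T t \<ge> 0" and Tanti: "\<And>t t'. t \<le> t' \<Longrightarrow> T t' \<le> T t"
    and Tsmall: "eventually (\<lambda>t. t^2 * T t \<le> 1) at_top"
    and tn0: "tn 0 = 0"
    and tn_pos: "eventually (\<lambda>n. tn n > 0) sequentially"
    and tn_ln: "((\<lambda>n. ln (tn n) / ln (real n)) \<longlongrightarrow> 1/2) sequentially"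
    and tn_ratio: "eventually (\<lambda>n. tn (Suc n) \<le> 2 * tn n) sequentially"
    and e_lim: "((\<lambda>n. ln (real n / (tn n)^2) / g (ln (real n))) \<longlongrightarrow> 0) sequentially"
  shows "limsup (\<lambda>n. elog (real n * T (tn n)) / ereal (g (ln (real n))))
           = Limsup at_top (\<lambda>t. elog (t^2 * T t) / ereal (g (ln t))) * ereal ((1/2) powr \<rho>)
       \<and> liminf (\<lambda>n. elog (real n * T (tn n)) / ereal (g (ln (real n))))
           = Liminf at_top (\<lambda>t. elog (t^2 * T t) / ereal (g (ln t))) * ereal ((1/2) powr \<rho>)"
proof -
  define a where "a t = elog (t^2 * T t) / ereal (g (ln t))" for t
  define r where "r n = g (ln (tn n)) / g (ln (real n))" for n
  define e where "e n = ln (real n / (tn n)^2) / g (ln (real n))" for n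
  have lnn: "filterlim (\<lambda>n. ln (real n)) at_top sequentially"
    by (rule filterlim_compose[OF ln_at_top filterlim_real_sequentially])
  have l1: "filterlim (\<lambda>n. ln (tn n) / ln (real n) * ln (real n)) at_top sequentially"
    by (rule filterlim_tendsto_pos_mult_at_top[OF tn_ln _ lnn]) simp
  have l2: "eventually (\<lambda>n. ln (tn n) / ln (real n) * ln (real n) = ln (tn n)) sequentially"
    using eventually_ge_at_top[of "2::nat"] by eventually_elim auto
  have lntn: "filterlim (\<lambda>n. ln (tn n)) at_top sequentially"
    using filterlim_cong[OF refl refl l2] l1 by simp
  have l3: "filterlim (\<lambda>n. exp (ln (tn n))) at_top sequentially"
    by (rule filterlim_compose[OF exp_at_top lntn])
  have l4: "eventually (\<lambda>n. exp (ln (tn n)) = tn n) sequentially"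
    using tn_pos by eventually_elim auto
  have tn_top: "filterlim tn at_top sequentially"
    using filterlim_cong[OF refl refl l4] l3 by simp
  have r_lim: "r \<longlonglongrightarrow> (1/2) powr \<rho>"
    unfolding r_def by (rule reg_ratio[OF g lnn tn_ln]) simp
  have Gn: "eventually (\<lambda>n. g (ln (real n)) \<ge> 1) sequentially"
    using g_ev_ge[OF g, of 1] lnn filterlim_iff by fastforce
  have Gtn: "eventually (\<lambda>n. g (ln (tn n)) \<ge> 1) sequentially"
    using g_ev_ge[OF g, of 1] lntn filterlim_iff by fastforce
  have a0: "eventually (\<lambda>t. a t \<le> 0) at_top"
    using Tsmall eventually_ge_at_top[of 1] ev_ln[OF g_ev_ge[OF g, of 1]]
  proof eventually_elim
    case (elim t)
    show ?case
    proof (cases "T t = 0")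
      case True then show ?thesis using elim by (simp add: a_def minf_div_pos)
    next
      case False
      then have "T t > 0" using Tnn[of t] by simp
      then have "t^2 * T t > 0" using elim by simp
      then have "ln (t^2 * T t) \<le> 0" using elim by simp
      then show ?thesis using \<open>t^2 * T t > 0\<close> elim
        by (simp add: a_def elog_pos divide_nonpos_pos)
    qed
  qed
  have beq: "eventually (\<lambda>n. elog (real n * T (tn n)) / ereal (g (ln (real n)))
                = ereal (e n) + a (tn n) * ereal (r n)) sequentially"
    using eventually_ge_at_top[of "2::nat"] tn_pos Gn Gtn
  proof eventually_elim
    case (elim n)
    have rp: "r n > 0" using elim by (simp add: r_def)
    show ?case
    proof (cases "T (tn n) = 0")
      case True then show ?thesis using elim rp by (simp add: a_def minf_div_pos)
    next
      case False
      then have Tp: "T (tn n) > 0" using Tnn[of "tn n"] by simp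
      have n0: "real n > 0" using elim by simp
      have "ln (real n * T (tn n)) = ln (real n / (tn n)^2 * ((tn n)^2 * T (tn n)))"
        using elim by (simp add: power2_eq_square)
      also have "\<dots> = ln (real n / (tn n)^2) + ln ((tn n)^2 * T (tn n))"
        using elim n0 Tp by (intro ln_mult_pos) auto
      finally have L: "ln (real n * T (tn n)) / g (ln (real n))
          = ln (real n / (tn n)^2) / g (ln (real n)) + ln ((tn n)^2 * T (tn n)) / g (ln (real n))"
        by (simp add: add_divide_distrib)
      have "ln ((tn n)^2 * T (tn n)) / g (ln (tn n)) * r n = ln ((tn n)^2 * T (tn n)) / g (ln (real n))"
        using elim unfolding r_def by simp
      then have L2: "ln (real n * T (tn n)) / g (ln (real n))
          = e n + ln ((tn n)^2 * T (tn n)) / g (ln (tn n)) * r n"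
        using L unfolding e_def by simp
      have p1: "real n * T (tn n) > 0" "(tn n)^2 * T (tn n) > 0" using n0 Tp elim by auto
      have "a (tn n) = ereal (ln ((tn n)^2 * T (tn n)) / g (ln (tn n)))"
        unfolding a_def using p1 elim by (simp add: elog_pos)
      moreover have "elog (real n * T (tn n)) / ereal (g (ln (real n)))
           = ereal (ln (real n * T (tn n)) / g (ln (real n)))"
        using p1 elim by (simp add: elog_pos)
      ultimately show ?thesis using L2 by simp
    qed
  qed
  have x0: "eventually (\<lambda>n. a (tn n) \<le> 0) sequentially"
    using a0 tn_top filterlim_iff by fastforce
  have e_ereal: "(\<lambda>n. ereal (e n)) \<longlonglongrightarrow> ereal 0"
    using e_lim unfolding e_def by (intro tendsto_ereal) auto
  have QMa: "eventually (\<lambda>t. \<forall>t'. t \<le> t' \<and> t' \<le> 2 * t \<longrightarrow>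
                      a t' \<le> a t * ereal (1/(1+\<epsilon>)) + ereal \<epsilon>) at_top" if "\<epsilon> > 0" for \<epsilon>
    unfolding a_def by (rule QM[OF g \<rho> Tnn Tanti Tsmall that])
  have interp: "limsup (\<lambda>n. a (tn n)) = Limsup at_top a \<and> liminf (\<lambda>n. a (tn n)) = Liminf at_top a"
    by (rule interpolation[OF tn0 tn_top tn_ratio QMa a0])
  have mc: "limsup (\<lambda>n. a (tn n) * ereal (r n)) = limsup (\<lambda>n. a (tn n)) * ereal ((1/2) powr \<rho>)
       \<and> liminf (\<lambda>n. a (tn n) * ereal (r n)) = liminf (\<lambda>n. a (tn n)) * ereal ((1/2) powr \<rho>)"
    by (rule limsup_liminf_mult_conv[OF x0 r_lim]) simp
  have "limsup (\<lambda>n. elog (real n * T (tn n)) / ereal (g (ln (real n))))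
      = limsup (\<lambda>n. ereal (e n) + a (tn n) * ereal (r n))"
    by (rule Limsup_eq[OF beq])
  also have "\<dots> = ereal 0 + limsup (\<lambda>n. a (tn n) * ereal (r n))"
    by (rule ereal_limsup_lim_add[OF e_ereal]) simp
  finally have 1: "limsup (\<lambda>n. elog (real n * T (tn n)) / ereal (g (ln (real n))))
      = Limsup at_top a * ereal ((1/2) powr \<rho>)" using mc interp by simp
  have "liminf (\<lambda>n. elog (real n * T (tn n)) / ereal (g (ln (real n))))
      = liminf (\<lambda>n. ereal (e n) + a (tn n) * ereal (r n))"
    by (rule Liminf_eq[OF beq])
  also have "\<dots> = ereal 0 + liminf (\<lambda>n. a (tn n) * ereal (r n))"
    by (rule ereal_liminf_lim_add[OF e_ereal]) simp
  finally have 2: "liminf (\<lambda>n. elog (real n * T (tn n)) / ereal (g (ln (real n))))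
      = Liminf at_top a * ereal ((1/2) powr \<rho>)" using mc interp by simp
  have a_eq: "a = (\<lambda>t. elog (t^2 * T t) / ereal (g (ln t)))" by (rule ext) (simp add: a_def)
  show ?thesis using 1 2 a_eq by simp
qed

lemma tail_small:
  assumes P: "prob_space M" and Xm: "X \<in> borel_measurable M"
    and Xi: "integrable M (\<lambda>\<omega>. (X \<omega>)^2)"
  shows "eventually (\<lambda>t. t^2 * tailP M X t \<le> 1) at_top"
proof -
  interpret prob_space M by (rule P)
  note [measurable] = Xm
  define S where "S t \<omega> = (if X \<omega> > t then (X \<omega>)^2 else 0)" for t \<omega>
  have Sm: "S t \<in> borel_measurable M" for t unfolding S_def by measurable
  have Si: "integrable M (S t)" for t
    by (rule Bochner_Integration.integrable_bound[OF Xi Sm]) (auto simp: S_def)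
  have lim: "((\<lambda>t. integral\<^sup>L M (S t)) \<longlongrightarrow> integral\<^sup>L M (\<lambda>\<omega>. 0::real)) at_top"
  proof (rule integral_dominated_convergence_at_top[where w = "\<lambda>\<omega>. (X \<omega>)^2"])
    show "(\<lambda>\<omega>. 0::real) \<in> borel_measurable M" by simp
    show "S t \<in> borel_measurable M" for t by (rule Sm)
    show "integrable M (\<lambda>\<omega>. (X \<omega>)^2)" by (rule Xi)
    show "AE \<omega> in M. ((\<lambda>t. S t \<omega>) \<longlongrightarrow> 0) at_top"
    proof (rule AE_I2)
      fix \<omega>
      have "eventually (\<lambda>t. S t \<omega> = 0) at_top"
        using eventually_ge_at_top[of "X \<omega>"] by eventually_elim (auto simp: S_def)
      then show "((\<lambda>t. S t \<omega>) \<longlongrightarrow> 0) at_top" by (rule tendsto_eventually)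
    qed
    show "\<forall>\<^sub>F t in at_top. AE \<omega> in M. norm (S t \<omega>) \<le> (X \<omega>)^2"
      by (intro always_eventually allI AE_I2) (auto simp: S_def)
  qed
  then have "eventually (\<lambda>t. integral\<^sup>L M (S t) < 1) at_top"
    by (intro order_tendstoD(2)) auto
  then show ?thesis using eventually_ge_at_top[of 0]
  proof eventually_elim
    case (elim t)
    define A where "A = {\<omega> \<in> space M. X \<omega> > t}"
    have A: "A \<in> sets M" unfolding A_def by measurable
    have "t^2 * tailP M X t = integral\<^sup>L M (\<lambda>\<omega>. t^2 * indicator A \<omega>)"
      using A by (simp add: tailP_def A_def[symmetric] Int_absorb2 sets.sets_into_space)
    also have "\<dots> \<le> integral\<^sup>L M (S t)"
    proof (rule integral_mono)
      show "integrable M (\<lambda>\<omega>. t^2 * indicator A \<omega>)"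
        using A by (intro integrable_mult_right integrable_real_indicator) (auto simp: emeasure_eq_measure)
      show "integrable M (S t)" by (rule Si)
      fix \<omega> assume "\<omega> \<in> space M"
      show "t^2 * indicator A \<omega> \<le> S t \<omega>"
        using elim by (auto simp: S_def A_def indicator_def intro!: power_mono)
    qed
    finally show ?case using elim by simp
  qed
qed

lemma common_lims:
  assumes g: "regvar_class \<rho> g" and \<rho>: "\<rho> \<ge> 0"
  shows "filterlim (\<lambda>n. ln (real n)) at_top sequentially"
    "eventually (\<lambda>n. g (ln (real n)) \<ge> 1) sequentially"
    "((\<lambda>n. ln (g (ln (real n))) / ln (real n)) \<longlongrightarrow> 0) sequentially"
    "((\<lambda>n. ln (g (ln (real n))) / g (ln (real n))) \<longlongrightarrow> 0) sequentially"
    "((\<lambda>n. c / ln (real n)) \<longlongrightarrow> 0) sequentially"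
    "((\<lambda>n. c / g (ln (real n))) \<longlongrightarrow> 0) sequentially"
proof -
  show lnn: "filterlim (\<lambda>n. ln (real n)) at_top sequentially"
    by (rule filterlim_compose[OF ln_at_top filterlim_real_sequentially])
  show "eventually (\<lambda>n. g (ln (real n)) \<ge> 1) sequentially"
    using g_ev_ge[OF g, of 1] lnn filterlim_iff by fastforce
  show "((\<lambda>n. ln (g (ln (real n))) / ln (real n)) \<longlongrightarrow> 0) sequentially"
    by (rule filterlim_compose[OF lng_over_x[OF g \<rho>] lnn])
  have gl: "filterlim (\<lambda>n. g (ln (real n))) at_top sequentially"
    by (rule filterlim_compose[OF regvarD(4)[OF g] lnn])
  show "((\<lambda>n. ln (g (ln (real n))) / g (ln (real n))) \<longlongrightarrow> 0) sequentially"
    by (rule filterlim_compose[OF lng_over_g[OF g] lnn])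
  show "((\<lambda>n. c / ln (real n)) \<longlongrightarrow> 0) sequentially"
    by (rule tendsto_divide_0[OF tendsto_const filterlim_at_top_imp_at_infinity[OF lnn]])
  show "((\<lambda>n. c / g (ln (real n))) \<longlongrightarrow> 0) sequentially"
    by (rule tendsto_divide_0[OF tendsto_const filterlim_at_top_imp_at_infinity[OF gl]])
qed

lemma seq1:
  assumes g: "regvar_class \<rho> g" and \<rho>: "\<rho> \<ge> 0" and s: "s > 0"
  defines "tn \<equiv> \<lambda>n. s * sqrt (real n * g (ln (real n)))"
  shows "tn 0 = 0" "eventually (\<lambda>n. tn n > 0) sequentially"
    "((\<lambda>n. ln (tn n) / ln (real n)) \<longlongrightarrow> 1/2) sequentially"
    "eventually (\<lambda>n. tn (Suc n) \<le> 2 * tn n) sequentially"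
    "((\<lambda>n. ln (real n / (tn n)^2) / g (ln (real n))) \<longlongrightarrow> 0) sequentially"
proof -
  note C = common_lims[OF g \<rho>]
  show "tn 0 = 0" by (simp add: tn_def)
  have ev: "eventually (\<lambda>n. n \<ge> 2 \<and> g (ln (real n)) \<ge> 1) sequentially"
    using eventually_ge_at_top[of "2::nat"] C(2) by eventually_elim auto
  then show pos: "eventually (\<lambda>n. tn n > 0) sequentially"
    by eventually_elim (use s in \<open>auto simp: tn_def\<close>)
  have lnt: "eventually (\<lambda>n. ln (tn n) = ln s + (ln (real n) + ln (g (ln (real n)))) / 2) sequentially"
    using ev
  proof eventually_elim
    case (elim n)
    have p: "real n > 0" "g (ln (real n)) > 0" using elim by auto
    have "ln (tn n) = ln s + ln (sqrt (real n * g (ln (real n))))"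
      unfolding tn_def using s p by (intro ln_mult_pos) auto
    also have "\<dots> = ln s + ln (real n * g (ln (real n))) / 2"
      using p by (simp add: ln_sqrt)
    also have "\<dots> = ln s + (ln (real n) + ln (g (ln (real n)))) / 2"
      using p by (simp add: ln_mult_pos)
    finally show ?case .
  qed
  have "((\<lambda>n. ln s / ln (real n) + 1/2 + (ln (g (ln (real n))) / ln (real n)) / 2) \<longlongrightarrow> 0 + 1/2 + 0/2) sequentially"
    by (intro tendsto_intros C) auto
  moreover have "eventually (\<lambda>n. ln s / ln (real n) + 1/2 + (ln (g (ln (real n))) / ln (real n)) / 2
                   = ln (tn n) / ln (real n)) sequentially"
    using lnt ev
  proof eventually_elim
    case (elim n)
    have "ln (real n) > 0" using elim by simp
    then show ?case by (simp only: elim(1)) (simp add: field_simps)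
  qed
  ultimately show "((\<lambda>n. ln (tn n) / ln (real n)) \<longlongrightarrow> 1/2) sequentially"
    by (auto intro: Lim_transform_eventually)
  have sh: "eventually (\<lambda>n. g (ln (real n) + ln 2) \<le> (1+1) * g (ln (real n))) sequentially"
    using g_shift[OF g \<rho>, of "ln 2" 1] C(1) filterlim_iff by fastforce
  show "eventually (\<lambda>n. tn (Suc n) \<le> 2 * tn n) sequentially"
    using ev sh
  proof eventually_elim
    case (elim n)
    have p: "real n > 0" "g (ln (real n)) > 0" using elim by auto
    have "ln (real (Suc n)) \<le> ln (2 * real n)" using elim by simp
    also have "\<dots> = ln (real n) + ln 2" using p by (simp add: ln_mult_pos)
    finally have "g (ln (real (Suc n))) \<le> g (ln (real n) + ln 2)"
      using elim by (intro mono_onD[OF regvarD(1)[OF g]]) auto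
    then have g2: "g (ln (real (Suc n))) \<le> 2 * g (ln (real n))" using elim by simp
    have "real (Suc n) * g (ln (real (Suc n))) \<le> (2 * real n) * (2 * g (ln (real n)))"
      using g2 elim by (intro mult_mono) (auto intro: regvarD(2)[OF g])
    then have le: "real (Suc n) * g (ln (real (Suc n))) \<le> 4 * (real n * g (ln (real n)))" by simp
    have nn: "real (Suc n) * g (ln (real (Suc n))) \<ge> 0"
      by (intro mult_nonneg_nonneg) (auto intro: regvarD(2)[OF g])
    have "(tn (Suc n))^2 = s^2 * (real (Suc n) * g (ln (real (Suc n))))"
      using nn by (simp add: tn_def power_mult_distrib)
    also have "\<dots> \<le> s^2 * (4 * (real n * g (ln (real n))))"
      using le by (intro mult_left_mono) auto
    also have "\<dots> = (2 * tn n)^2"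
      using p by (simp add: tn_def power_mult_distrib)
    finally have sq: "(tn (Suc n))^2 \<le> (2 * tn n)^2" .
    have "0 \<le> 2 * tn n" using p s by (simp add: tn_def)
    then show ?case using sq power2_le_imp_le by blast
  qed
  have "((\<lambda>n. - 2 * (ln s / g (ln (real n))) - ln (g (ln (real n))) / g (ln (real n))) \<longlongrightarrow> - 2 * 0 - 0) sequentially"
    by (intro tendsto_intros C)
  moreover have "eventually (\<lambda>n. - 2 * (ln s / g (ln (real n))) - ln (g (ln (real n))) / g (ln (real n))
                   = ln (real n / (tn n)^2) / g (ln (real n))) sequentially"
    using lnt ev pos
  proof eventually_elim
    case (elim n)
    have p: "real n > 0" "g (ln (real n)) > 0" using elim by auto
    have "ln (real n / (tn n)^2) = ln (real n) - ln ((tn n)^2)"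
      using p elim by (intro ln_divide_pos) auto
    also have "ln ((tn n)^2) = 2 * ln (tn n)" by (simp add: ln_realpow)
    also have "ln (real n) - 2 * ln (tn n) = - 2 * ln s - ln (g (ln (real n)))"
      by (simp only: elim(1)) (simp add: algebra_simps)
    finally have "ln (real n / (tn n)^2) = - 2 * ln s - ln (g (ln (real n)))" .
    then show ?case using p by (simp add: diff_divide_distrib)
  qed
  ultimately show "((\<lambda>n. ln (real n / (tn n)^2) / g (ln (real n))) \<longlongrightarrow> 0) sequentially"
    by (auto intro: Lim_transform_eventually)
qed

lemma seq2:
  assumes g: "regvar_class \<rho> g" and \<rho>: "\<rho> \<ge> 0" and s: "s > 0"
  defines "tn \<equiv> \<lambda>n. s * sqrt (real n) / g (ln (real n))"
  shows "tn 0 = 0" "eventually (\<lambda>n. tn n > 0) sequentially"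
    "((\<lambda>n. ln (tn n) / ln (real n)) \<longlongrightarrow> 1/2) sequentially"
    "eventually (\<lambda>n. tn (Suc n) \<le> 2 * tn n) sequentially"
    "((\<lambda>n. ln (real n / (tn n)^2) / g (ln (real n))) \<longlongrightarrow> 0) sequentially"
proof -
  note C = common_lims[OF g \<rho>]
  show "tn 0 = 0" by (simp add: tn_def)
  have ev: "eventually (\<lambda>n. n \<ge> 2 \<and> g (ln (real n)) \<ge> 1) sequentially"
    using eventually_ge_at_top[of "2::nat"] C(2) by eventually_elim auto
  then show pos: "eventually (\<lambda>n. tn n > 0) sequentially"
    by eventually_elim (use s in \<open>auto simp: tn_def\<close>)
  have lnt: "eventually (\<lambda>n. ln (tn n) = ln s + ln (real n) / 2 - ln (g (ln (real n)))) sequentially"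
    using ev
  proof eventually_elim
    case (elim n)
    have p: "real n > 0" "g (ln (real n)) > 0" using elim by auto
    have "ln (tn n) = ln (s * sqrt (real n)) - ln (g (ln (real n)))"
      unfolding tn_def using s p by (intro ln_divide_pos) auto
    also have "ln (s * sqrt (real n)) = ln s + ln (sqrt (real n))"
      using s p by (intro ln_mult_pos) auto
    also have "ln (sqrt (real n)) = ln (real n) / 2"
      using p by (simp add: ln_sqrt)
    finally show ?case .
  qed
  have "((\<lambda>n. ln s / ln (real n) + 1/2 - ln (g (ln (real n))) / ln (real n)) \<longlongrightarrow> 0 + 1/2 - 0) sequentially"
    by (intro tendsto_intros C)
  moreover have "eventually (\<lambda>n. ln s / ln (real n) + 1/2 - ln (g (ln (real n))) / ln (real n)
                   = ln (tn n) / ln (real n)) sequentially"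
    using lnt ev
  proof eventually_elim
    case (elim n)
    have "ln (real n) > 0" using elim by simp
    then show ?case by (simp only: elim(1)) (simp add: field_simps)
  qed
  ultimately show "((\<lambda>n. ln (tn n) / ln (real n)) \<longlongrightarrow> 1/2) sequentially"
    by (auto intro: Lim_transform_eventually)
  show "eventually (\<lambda>n. tn (Suc n) \<le> 2 * tn n) sequentially"
    using ev
  proof eventually_elim
    case (elim n)
    have p: "real n > 0" "g (ln (real n)) > 0" using elim by auto
    have "ln (real n) \<le> ln (real (Suc n))" using p by simp
    then have gm: "g (ln (real n)) \<le> g (ln (real (Suc n)))"
      using elim by (intro mono_onD[OF regvarD(1)[OF g]]) auto
    have "(sqrt (real (Suc n)))^2 \<le> (2 * sqrt (real n))^2"
      using elim by (simp add: power_mult_distrib)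
    then have sq: "sqrt (real (Suc n)) \<le> 2 * sqrt (real n)"
      by (rule power2_le_imp_le) simp
    have "tn (Suc n) \<le> s * sqrt (real (Suc n)) / g (ln (real n))"
      unfolding tn_def using gm p s by (intro divide_left_mono) auto
    also have "\<dots> \<le> s * (2 * sqrt (real n)) / g (ln (real n))"
      using sq s p by (intro divide_right_mono mult_left_mono) auto
    also have "\<dots> = 2 * tn n" by (simp add: tn_def)
    finally show ?case .
  qed
  have "((\<lambda>n. 2 * (ln (g (ln (real n))) / g (ln (real n))) - 2 * (ln s / g (ln (real n)))) \<longlongrightarrow> 2 * 0 - 2 * 0) sequentially"
    by (intro tendsto_intros C)
  moreover have "eventually (\<lambda>n. 2 * (ln (g (ln (real n))) / g (ln (real n))) - 2 * (ln s / g (ln (real n)))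
                   = ln (real n / (tn n)^2) / g (ln (real n))) sequentially"
    using lnt ev pos
  proof eventually_elim
    case (elim n)
    have p: "real n > 0" "g (ln (real n)) > 0" using elim by auto
    have "ln (real n / (tn n)^2) = ln (real n) - ln ((tn n)^2)"
      using p elim by (intro ln_divide_pos) auto
    also have "ln ((tn n)^2) = 2 * ln (tn n)" by (simp add: ln_realpow)
    also have "ln (real n) - 2 * ln (tn n) = 2 * ln (g (ln (real n))) - 2 * ln s"
      by (simp only: elim(1)) (simp add: algebra_simps)
    finally have "ln (real n / (tn n)^2) = 2 * ln (g (ln (real n))) - 2 * ln s" .
    then show ?case using p by (simp add: diff_divide_distrib)
  qed
  ultimately show "((\<lambda>n. ln (real n / (tn n)^2) / g (ln (real n))) \<longlongrightarrow> 0) sequentially"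
    by (auto intro: Lim_transform_eventually)
qed

lemma final_form:
  fixes L :: ereal
  shows "- (- L) / ereal (2 powr \<rho>) = L * ereal ((1/2) powr \<rho>)"
  by (simp add: divide_ereal_def powr_divide inverse_eq_divide)

theorem lemma3p3:
  fixes M :: "'a measure" and X :: "'a \<Rightarrow> real" and g :: "real \<Rightarrow> real"
    and \<rho> s :: real
  assumes "prob_space M"
    and "X \<in> borel_measurable M"
    and "integrable M (\<lambda>\<omega>. (X \<omega>)^2)"
    and "\<rho> \<ge> 0"
    and "regvar_class \<rho> g"
    and "s > 0"
  shows
    "limsup (\<lambda>n::nat. elog (real n * tailP M X (s * sqrt (real n * g (ln (real n)))))
                        / ereal (g (ln (real n))))
       = - lambda1_upper M X g / ereal (2 powr \<rho>)
    \<and> liminf (\<lambda>n::nat. elog (real n * tailP M X (s * sqrt (real n * g (ln (real n)))))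
                        / ereal (g (ln (real n))))
       = - lambda1_lower M X g / ereal (2 powr \<rho>)
    \<and> limsup (\<lambda>n::nat. elog (real n * tailP M X (s * sqrt (real n) / g (ln (real n))))
                        / ereal (g (ln (real n))))
       = - lambda1_upper M X g / ereal (2 powr \<rho>)
    \<and> liminf (\<lambda>n::nat. elog (real n * tailP M X (s * sqrt (real n) / g (ln (real n))))
                        / ereal (g (ln (real n))))
       = - lambda1_lower M X g / ereal (2 powr \<rho>)"
proof -
  interpret prob_space M by (rule assms(1))
  note [measurable] = assms(2)
  have Tnn: "\<And>t. tailP M X t \<ge> 0" by (simp add: tailP_def)
  have Tanti: "\<And>t t'. t \<le> t' \<Longrightarrow> tailP M X t' \<le> tailP M X t"
  proof -
    fix t t' :: real assume "t \<le> t'"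
    then show "tailP M X t' \<le> tailP M X t"
      unfolding tailP_def by (intro finite_measure_mono) auto
  qed
  have Tsmall: "eventually (\<lambda>t. t^2 * tailP M X t \<le> 1) at_top"
    by (rule tail_small[OF assms(1-3)])
  note m1 = master[OF assms(5,4) Tnn Tanti Tsmall seq1[OF assms(5,4,6)]]
  note m2 = master[OF assms(5,4) Tnn Tanti Tsmall seq2[OF assms(5,4,6)]]
  show ?thesis
    using m1 m2 unfolding lambda1_upper_def lambda1_lower_def final_form by simp
qed

end
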